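(* For $\nu>0$ and integer $n\ge0$ let $\varphi_n(\nu)=\frac{\Gamma\left(\nu+\frac12\right)}{\nu^{2n}\Gamma\left(\nu-n+\frac12\right)}$. For every fixed integer $N\ge0$ and every $\lambda>0$, $$\mathbf M_\nu(\lambda\nu)=-\frac{\left(\frac12\lambda\nu\right)^{\nu-1}}{\sqrt\pi\,\Gamma\left(\nu+\frac12\right)}\left(\sum_{n=0}^{N-1}(-1)^n\frac{(2n)!}{n!\,\lambda^{2n}}\varphi_n(\nu)+(-1)^N\frac{(2N)!}{N!\,\lambda^{2N}}\varphi_N(\nu)\,E_N(\nu,\lambda)\right)$$ for $\nu>\max(0,2N-\frac32)$, where $E_N(\nu,\lambda)=\mathcal O(1)$ as $\nu\to+\infty$ uniformly in $\lambda>0$. Since $\varphi_n(\nu)\sim\nu^{-n}$ is an asymptotic sequence, this gives the generalised asymptotic expansion $$\mathbf M_\nu(\lambda\nu)\sim-\frac{\left(\frac12\lambda\nu\right)^{\nu-1}}{\sqrt\pi\,\Gamma\left(\nu+\frac12\right)}\sum_{n=0}^\infty(-1)^n\frac{(2n)!}{n!\,\lambda^{2n}}\varphi_n(\nu)\qquad(\nu\to+\infty).$$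
   Context: $\mathbf M_\nu(z)=\mathbf L_\nu(z)-I_\nu(z)$, where $\mathbf L_\nu$ is the modified Struve function and $I_\nu$ the modified Bessel function of the first kind. *)

theory Defs
  imports "HOL-Analysis.Analysis"
begin

definition besselI :: "real \<Rightarrow> real \<Rightarrow> real" where
  "besselI \<nu> x = (\<Sum>k. (x/2) powr (2 * real k + \<nu>) / (fact k * Gamma (real k + \<nu> + 1)))"

definition struveL :: "real \<Rightarrow> real \<Rightarrow> real" where
  "struveL \<nu> x = (\<Sum>k. (x/2) powr (2 * real k + \<nu> + 1) /
                      (Gamma (real k + 3/2) * Gamma (real k + \<nu> + 3/2)))"

definition struveM :: "real \<Rightarrow> real \<Rightarrow> real" where
  "struveM \<nu> x = struveL \<nu> x - besselI \<nu> x"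

definition phi :: "nat \<Rightarrow> real \<Rightarrow> real" where
  "phi n \<nu> = Gamma (\<nu> + 1/2) / (\<nu> ^ (2*n) * Gamma (\<nu> - real n + 1/2))"

end

theory Submission
  imports Defs
begin

lemma moment:
  fixes a :: real and j :: nat
  assumes a: "a > 0"
  shows "((\<lambda>t. (1 - t^2) powr a * t^j) has_integral Beta ((real j+1)/2) (a+1) / 2) {0..1}"
proof -
  define f where "f = (\<lambda>t::real. (1 - t^2) powr a * t^j)"
  have c1: "continuous_on {0..1::real} (\<lambda>t::real. (1 - t^2) powr a)"
    by (rule continuous_on_powr') (use a in \<open>auto intro!: continuous_intros simp: abs_square_le_1\<close>)
  have cf: "continuous_on {0..1} f" unfolding f_def
    by (intro continuous_on_mult[OF c1] continuous_intros)
  have sub: "((\<lambda>u. (inverse (sqrt u) / 2) *\<^sub>R f (sqrt u)) has_integral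
      (integral {sqrt 0..sqrt 1} f - integral {sqrt 1..sqrt 0} f)) {0..1}"
  proof (rule has_integral_substitution_general[of "{0}" 0 1 sqrt 0 1 f "\<lambda>x. inverse (sqrt x) / 2"])
    show "continuous_on {0..1} sqrt" by (rule continuous_on_real_sqrt[OF continuous_on_id])
    fix x assume "x \<in> {0..1::real} - {0}"
    then have "x > 0" by auto
    then show "(sqrt has_field_derivative inverse (sqrt x) / 2) (at x within {0..1})"
      by (rule has_field_derivative_at_within[OF DERIV_real_sqrt])
  next
    show "continuous_on {0..1} f" by (rule cf)
  qed (simp_all add: image_subset_iff)
  have beta: "((\<lambda>u. u powr ((real j+1)/2 - 1) * (1 - u) powr (a + 1 - 1)) has_integral Beta ((real j+1)/2) (a+1)) {0..1}"
    by (rule has_integral_Beta_real) (use a in auto)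
  have beta2: "((\<lambda>u. (inverse (sqrt u) / 2) *\<^sub>R f (sqrt u)) has_integral Beta ((real j+1)/2) (a+1) / 2) {0..1}"
  proof (rule has_integral_spike_finite[of "{0}", OF _ _ has_integral_divide[OF beta, of 2]])
    fix u :: real assume u: "u \<in> {0..1} - {0}"
    then have u0: "u > 0" by auto
    have "sqrt u ^ j = (u powr (1/2)) ^ j" using u0 by (simp add: powr_half_sqrt)
    also have "\<dots> = (u powr (1/2)) powr (real j)" by (rule powr_realpow[symmetric]) (use u0 in simp)
    also have "\<dots> = u powr (real j / 2)" by (simp add: powr_powr)
    finally have e1: "sqrt u ^ j = u powr (real j / 2)" .
    have "inverse (sqrt u) = inverse (u powr (1/2))" using u0 by (simp add: powr_half_sqrt)
    also have "\<dots> = u powr (-1/2)" using u0 by (simp add: powr_minus)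
    finally have e2: "inverse (sqrt u) = u powr (-1/2)" .
    moreover have "u powr ((real j+1)/2 - 1) = u powr (-1/2) * u powr (real j / 2)"
      using u0 by (subst powr_add[symmetric]) (simp add: field_simps)
    moreover have "(1 - (sqrt u)^2) = 1 - u" using u0 by simp
    ultimately show "(inverse (sqrt u) / 2) *\<^sub>R f (sqrt u) = u powr ((real j+1)/2 - 1) * (1 - u) powr (a + 1 - 1) / 2"
      unfolding f_def using e1 e2 by simp
  qed (simp_all add: image_subset_iff)
  have I: "integral {0..1} f = Beta ((real j+1)/2) (a+1) / 2"
    using has_integral_unique[OF sub beta2] by simp
  have "f integrable_on {0..1}" using cf integrable_continuous_real by blast
  then have H: "(f has_integral integral {0..1} f) {0..1}" by (rule integrable_integral)
  from H[unfolded I] show ?thesis unfolding f_def .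
qed

definition mom :: "real \<Rightarrow> nat \<Rightarrow> real" where
  "mom a j = Beta ((real j+1)/2) (a+1) / 2"

lemma exp_partial_le:
  fixes x :: real assumes "x \<ge> 0"
  shows "(\<Sum>j<k. x^j / fact j) \<le> exp x"
proof -
  have s: "(\<lambda>j. x^j / fact j) sums exp x" using exp_converges[of x] by (simp add: divide_inverse mult.commute)
  show ?thesis
    using sum_le_suminf[OF sums_summable[OF s], of "{..<k}"] sums_unique[OF s] assms by simp
qed

lemma termwise:
  fixes a x :: real and c :: "nat \<Rightarrow> real" and G :: "real \<Rightarrow> real"
  assumes a: "a > 0" and x: "x \<ge> 0"
    and ser: "\<And>t. t \<in> {0..1} \<Longrightarrow> (\<lambda>j. c j * t^j) sums G t"
    and cb: "\<And>j. \<bar>c j\<bar> \<le> x^j / fact j"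
  shows "(\<lambda>t. (1 - t^2) powr a * G t) integrable_on {0..1}"
    "(\<lambda>j. c j * mom a j) sums integral {0..1} (\<lambda>t. (1 - t^2) powr a * G t)"
proof -
  define f where "f = (\<lambda>k t. \<Sum>j<k. c j * ((1 - t^2) powr a * t^j))"
  have fi: "(f k has_integral (\<Sum>j<k. c j * mom a j)) {0..1}" for k
    unfolding f_def
    by (intro has_integral_sum has_integral_mult_right) (auto simp: mom_def intro: moment a)
  have le: "norm (f k t) \<le> exp x" if t: "t \<in> {0..1}" for k t
  proof -
    have "norm (f k t) \<le> (\<Sum>j<k. \<bar>c j * ((1 - t^2) powr a * t^j)\<bar>)"
      unfolding f_def real_norm_def by (rule sum_abs)
    also have "\<dots> \<le> (\<Sum>j<k. x^j / fact j)"
    proof (rule sum_mono)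
      fix j
      have p1: "(1 - t^2) powr a \<le> 1" using t by (intro powr_le1) (use a in \<open>auto simp: abs_square_le_1\<close>)
      have p2: "t^j \<le> 1" using t by (auto intro: power_le_one)
      have "\<bar>(1 - t^2) powr a * t^j\<bar> \<le> 1"
        using p1 p2 t by (simp add: abs_mult mult_le_one)
      then have "\<bar>c j\<bar> * \<bar>(1 - t^2) powr a * t^j\<bar> \<le> \<bar>c j\<bar> * 1"
        by (intro mult_left_mono) auto
      then show "\<bar>c j * ((1 - t^2) powr a * t^j)\<bar> \<le> x^j / fact j"
        using cb[of j] by (simp add: abs_mult)
    qed
    also have "\<dots> \<le> exp x" by (rule exp_partial_le[OF x])
    finally show ?thesis .
  qed
  have conv: "(\<lambda>k. f k t) \<longlonglongrightarrow> (1 - t^2) powr a * G t" if t: "t \<in> {0..1}" for t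
  proof -
    have "(\<lambda>k. \<Sum>j<k. c j * t^j) \<longlonglongrightarrow> G t" using ser[OF t] by (simp add: sums_def)
    then have "(\<lambda>k. (1 - t^2) powr a * (\<Sum>j<k. c j * t^j)) \<longlonglongrightarrow> (1 - t^2) powr a * G t"
      by (intro tendsto_mult tendsto_const)
    moreover have "(\<lambda>k. (1 - t^2) powr a * (\<Sum>j<k. c j * t^j)) = (\<lambda>k. f k t)"
      unfolding f_def by (simp add: sum_distrib_left mult_ac)
    ultimately show ?thesis by simp
  qed
  have D: "(\<lambda>t. (1 - t^2) powr a * G t) integrable_on {0..1}"
     "(\<lambda>k. integral {0..1} (f k)) \<longlonglongrightarrow> integral {0..1} (\<lambda>t. (1 - t^2) powr a * G t)"
    by (rule dominated_convergence[of f "{0..1}" "\<lambda>_. exp x"];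
        use fi le conv in \<open>auto intro: has_integral_integrable\<close>)+
  show "(\<lambda>t. (1 - t^2) powr a * G t) integrable_on {0..1}" by (rule D(1))
  show "(\<lambda>j. c j * mom a j) sums integral {0..1} (\<lambda>t. (1 - t^2) powr a * G t)"
    using D(2) unfolding sums_def using integral_unique[OF fi] by simp
qed

lemma Gp1: "(x::real) > 0 \<Longrightarrow> Gamma (x + 1) = x * Gamma x"
  by (rule Gamma_plus1) auto

lemma Gamma_half_nat_mult: "Gamma (real k + 1/2) * (4^k * fact k) = fact (2*k) * sqrt pi"
proof (induction k)
  case 0
  then show ?case by (simp add: Gamma_one_half_real)
next
  case (Suc k)
  have "Gamma (real (Suc k) + 1/2) = Gamma ((real k + 1/2) + 1)" by (simp add: algebra_simps)
  also have "\<dots> = (real k + 1/2) * Gamma (real k + 1/2)" by (rule Gp1) simp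
  finally have g: "Gamma (real (Suc k) + 1/2) = (real k + 1/2) * Gamma (real k + 1/2)" .
  have "2 * Suc k = Suc (Suc (2*k))" by simp
  then have "(fact (2 * Suc k)::real) = fact (Suc (Suc (2*k)))" by (simp only:)
  also have "\<dots> = (2 * real k + 2) * ((2 * real k + 1) * fact (2*k))"
    by (simp only: fact_Suc of_nat_mult of_nat_Suc, simp add: algebra_simps)
  finally have f: "(fact (2 * Suc k)::real) = (2 * real k + 2) * ((2 * real k + 1) * fact (2*k))" .
  have f2: "(fact (Suc k)::real) = (real k + 1) * fact k" by (simp add: fact_Suc algebra_simps)
  have p4: "(4::real) ^ Suc k = 4 * 4^k" by simp
  have "Gamma (real (Suc k) + 1/2) * (4 ^ Suc k * fact (Suc k)) =
     (real k + 1/2) * (4 * (real k + 1)) * (Gamma (real k + 1/2) * (4^k * fact k))"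
    unfolding g f2 p4 by (simp only: mult_ac)
  also have "\<dots> = (real k + 1/2) * (4 * (real k + 1)) * (fact (2*k) * sqrt pi)" using Suc by simp
  also have "\<dots> = fact (2 * Suc k) * sqrt pi" unfolding f by (simp add: algebra_simps)
  finally show ?case .
qed

lemma Gamma_half_nat: "Gamma (real k + 1/2) = fact (2*k) * sqrt pi / (4^k * fact k)"
proof -
  have "(4::real)^k * fact k > 0" by simp
  then show ?thesis using Gamma_half_nat_mult[of k] by (simp add: field_simps)
qed

lemma Gamma_threehalf_nat: "Gamma (real k + 3/2) = fact (2*k+1) * sqrt pi / (2 * 4^k * fact k)"
proof -
  have "Gamma (real k + 3/2) = Gamma ((real k + 1/2) + 1)" by (simp add: algebra_simps)
  also have "\<dots> = (real k + 1/2) * Gamma (real k + 1/2)" by (rule Gp1) simp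
  also have "\<dots> = fact (2*k+1) * sqrt pi / (2 * 4^k * fact k)"
  proof -
    have f: "(fact (2*k+1)::real) = (2 * real k + 1) * fact (2*k)" by (simp add: fact_Suc algebra_simps)
    show ?thesis unfolding Gamma_half_nat f by (simp add: field_simps)
  qed
  finally show ?thesis .
qed

definition KK :: "real \<Rightarrow> real \<Rightarrow> real" where
  "KK \<nu> x = 2 * (x/2) powr \<nu> / (sqrt pi * Gamma (\<nu> + 1/2))"

lemma besselI_int:
  fixes \<nu> x :: real assumes nu: "\<nu> > 1/2" and x: "x > 0"
  shows "besselI \<nu> x = KK \<nu> x * integral {0..1} (\<lambda>t. (1 - t^2) powr (\<nu> - 1/2) * cosh (x * t))"
proof -
  define c where "c = (\<lambda>j. if even j then x^j / fact j else 0)"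
  have ser: "(\<lambda>j. c j * t^j) sums cosh (x * t)" for t
  proof -
    have "(\<lambda>j. c j * t^j) = (\<lambda>n. if even n then (x*t) ^ n /\<^sub>R fact n else 0)"
      by (auto simp: c_def power_mult_distrib divide_inverse)
    then show ?thesis using cosh_converges[of "x*t"] by simp
  qed
  have cb: "\<bar>c j\<bar> \<le> x^j / fact j" for j using x by (auto simp: c_def)
  have S: "(\<lambda>j. c j * mom (\<nu> - 1/2) j) sums integral {0..1} (\<lambda>t. (1 - t^2) powr (\<nu> - 1/2) * cosh (x * t))"
    by (rule termwise(2)[OF _ _ ser cb]) (use nu x in auto)
  then have S2: "(\<lambda>k. c (2*k) * mom (\<nu> - 1/2) (2*k)) sums integral {0..1} (\<lambda>t. (1 - t^2) powr (\<nu> - 1/2) * cosh (x * t))"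
    by (subst sums_mono_reindex[of "\<lambda>k. 2*k"]) (auto simp: c_def strict_mono_def elim!: evenE)
  have trm: "KK \<nu> x * (c (2*k) * mom (\<nu> - 1/2) (2*k)) =
      (x/2) powr (2 * real k + \<nu>) / (fact k * Gamma (real k + \<nu> + 1))" for k
  proof -
    have g1: "Gamma (real k + \<nu> + 1) > 0" using nu by simp
    have g2: "Gamma (\<nu> + 1/2) > 0" using nu by simp
    have B: "mom (\<nu> - 1/2) (2*k) = Gamma (real k + 1/2) * Gamma (\<nu> + 1/2) / Gamma (real k + \<nu> + 1) / 2"
    proof -
      have e1: "(real (2*k) + 1) / 2 = real k + 1/2" by simp
      have e2: "\<nu> - 1/2 + 1 = \<nu> + 1/2" by simp
      have e3: "real k + 1/2 + (\<nu> + 1/2) = real k + \<nu> + 1" by simp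
      show ?thesis unfolding mom_def e1 e2 Beta_def e3 ..
    qed
    have P: "(x/2) powr (2 * real k + \<nu>) = (x/2)^(2*k) * (x/2) powr \<nu>"
      using x by (simp add: powr_add powr_realpow[symmetric])
      have p4: "(4::real)^k = (2^k)^2" by (simp add: power2_eq_square power_mult_distrib[symmetric])
      show ?thesis unfolding B P KK_def c_def Gamma_half_nat using g1 g2 p4
      by (simp add: field_simps power_mult_distrib power_mult)
  qed
  have "(\<lambda>k. KK \<nu> x * (c (2*k) * mom (\<nu> - 1/2) (2*k))) sums (KK \<nu> x * integral {0..1} (\<lambda>t. (1 - t^2) powr (\<nu> - 1/2) * cosh (x * t)))"
    by (rule sums_mult[OF S2])
  then have "(\<lambda>k. (x/2) powr (2 * real k + \<nu>) / (fact k * Gamma (real k + \<nu> + 1))) sums (KK \<nu> x * integral {0..1} (\<lambda>t. (1 - t^2) powr (\<nu> - 1/2) * cosh (x * t)))"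
    unfolding trm .
  then show ?thesis unfolding besselI_def by (rule sums_unique[symmetric])
qed

lemma cosh_int:
  fixes \<nu> x :: real assumes nu: "\<nu> > 1/2" and x: "x > 0"
  shows "(\<lambda>t. (1 - t^2) powr (\<nu> - 1/2) * cosh (x * t)) integrable_on {0..1}"
proof -
  define c where "c = (\<lambda>j. if even j then x^j / fact j else 0)"
  have ser: "(\<lambda>j. c j * t^j) sums cosh (x * t)" for t
  proof -
    have "(\<lambda>j. c j * t^j) = (\<lambda>n. if even n then (x*t) ^ n /\<^sub>R fact n else 0)"
      by (auto simp: c_def power_mult_distrib divide_inverse)
    then show ?thesis using cosh_converges[of "x*t"] by simp
  qed
  have cb: "\<bar>c j\<bar> \<le> x^j / fact j" for j using x by (auto simp: c_def)
  show ?thesis by (rule termwise(1)[OF _ _ ser cb]) (use nu x in auto)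
qed

lemma struveL_int:
  fixes \<nu> x :: real assumes nu: "\<nu> > 1/2" and x: "x > 0"
  shows "struveL \<nu> x = KK \<nu> x * integral {0..1} (\<lambda>t. (1 - t^2) powr (\<nu> - 1/2) * sinh (x * t))"
    "(\<lambda>t. (1 - t^2) powr (\<nu> - 1/2) * sinh (x * t)) integrable_on {0..1}"
proof -
  define c where "c = (\<lambda>j. if even j then 0 else x^j / fact j)"
  have ser: "(\<lambda>j. c j * t^j) sums sinh (x * t)" for t
  proof -
    have "(\<lambda>j. c j * t^j) = (\<lambda>n. if even n then 0 else (x*t) ^ n /\<^sub>R fact n)"
      by (auto simp: c_def power_mult_distrib divide_inverse)
    then show ?thesis using sinh_converges[of "x*t"] by simp
  qed
  have cb: "\<bar>c j\<bar> \<le> x^j / fact j" for j using x by (auto simp: c_def)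
  show "(\<lambda>t. (1 - t^2) powr (\<nu> - 1/2) * sinh (x * t)) integrable_on {0..1}"
    by (rule termwise(1)[OF _ _ ser cb]) (use nu x in auto)
  have S: "(\<lambda>j. c j * mom (\<nu> - 1/2) j) sums integral {0..1} (\<lambda>t. (1 - t^2) powr (\<nu> - 1/2) * sinh (x * t))"
    by (rule termwise(2)[OF _ _ ser cb]) (use nu x in auto)
  then have S2: "(\<lambda>k. c (2*k+1) * mom (\<nu> - 1/2) (2*k+1)) sums integral {0..1} (\<lambda>t. (1 - t^2) powr (\<nu> - 1/2) * sinh (x * t))"
    by (subst sums_mono_reindex[of "\<lambda>k. 2*k+1"]) (auto simp: c_def strict_mono_def elim!: oddE)
  have trm: "KK \<nu> x * (c (2*k+1) * mom (\<nu> - 1/2) (2*k+1)) =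
      (x/2) powr (2 * real k + \<nu> + 1) / (Gamma (real k + 3/2) * Gamma (real k + \<nu> + 3/2))" for k
  proof -
    have g1: "Gamma (real k + \<nu> + 3/2) > 0" using nu by simp
    have g2: "Gamma (\<nu> + 1/2) > 0" using nu by simp
    have B: "mom (\<nu> - 1/2) (2*k+1) = fact k * Gamma (\<nu> + 1/2) / Gamma (real k + \<nu> + 3/2) / 2"
    proof -
      have e1: "(real (2*k+1) + 1) / 2 = 1 + real k" by simp
      have e2: "\<nu> - 1/2 + 1 = \<nu> + 1/2" by simp
      have e3: "1 + real k + (\<nu> + 1/2) = real k + \<nu> + 3/2" by simp
      show ?thesis unfolding mom_def e1 e2 Beta_def e3 Gamma_fact ..
    qed
    have P: "(x/2) powr (2 * real k + \<nu> + 1) = (x/2)^(2*k+1) * (x/2) powr \<nu>"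
    proof -
      have "2 * real k + \<nu> + 1 = real (2*k+1) + \<nu>" by simp
      then show ?thesis using x by (simp only:) (simp add: powr_add powr_realpow[symmetric])
    qed
    have p4: "(4::real)^k = (2^k)^2" by (simp add: power2_eq_square power_mult_distrib[symmetric])
    have cc: "c (2*k+1) = x^(2*k+1) / fact (2*k+1)" by (simp add: c_def)
    define F where "F = (fact (2*k+1)::real)"
    have F0: "F > 0" unfolding F_def by simp
    show ?thesis unfolding B P KK_def cc Gamma_threehalf_nat F_def[symmetric] using g1 g2 p4 F0
      by (simp add: field_simps power_mult_distrib power_mult)
  qed
  have "(\<lambda>k. KK \<nu> x * (c (2*k+1) * mom (\<nu> - 1/2) (2*k+1))) sums (KK \<nu> x * integral {0..1} (\<lambda>t. (1 - t^2) powr (\<nu> - 1/2) * sinh (x * t)))"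
    by (rule sums_mult[OF S2])
  then have "(\<lambda>k. (x/2) powr (2 * real k + \<nu> + 1) / (Gamma (real k + 3/2) * Gamma (real k + \<nu> + 3/2))) sums (KK \<nu> x * integral {0..1} (\<lambda>t. (1 - t^2) powr (\<nu> - 1/2) * sinh (x * t)))"
    unfolding trm .
  then show "struveL \<nu> x = KK \<nu> x * integral {0..1} (\<lambda>t. (1 - t^2) powr (\<nu> - 1/2) * sinh (x * t))"
    unfolding struveL_def by (rule sums_unique[symmetric])
qed

lemma struveM_int:
  fixes \<nu> x :: real assumes nu: "\<nu> > 1/2" and x: "x > 0"
  shows "struveM \<nu> x = - KK \<nu> x * integral {0..1} (\<lambda>t. (1 - t^2) powr (\<nu> - 1/2) * exp (- x * t))"
proof -
  have "integral {0..1} (\<lambda>t. (1 - t^2) powr (\<nu> - 1/2) * sinh (x * t)) -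
        integral {0..1} (\<lambda>t. (1 - t^2) powr (\<nu> - 1/2) * cosh (x * t)) =
        integral {0..1} (\<lambda>t. (1 - t^2) powr (\<nu> - 1/2) * sinh (x * t) - (1 - t^2) powr (\<nu> - 1/2) * cosh (x * t))"
    by (rule integral_diff[symmetric]) (rule struveL_int(2)[OF nu x], rule cosh_int[OF nu x])
  also have "(\<lambda>t. (1 - t^2) powr (\<nu> - 1/2) * sinh (x * t) - (1 - t^2) powr (\<nu> - 1/2) * cosh (x * t))
      = (\<lambda>t. - ((1 - t^2) powr (\<nu> - 1/2) * exp (- x * t)))"
    by (rule ext) (simp add: sinh_def cosh_def field_simps)
  also have "integral {0..1} \<dots> = - integral {0..1} (\<lambda>t. (1 - t^2) powr (\<nu> - 1/2) * exp (- x * t))"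
    by (rule integral_neg)
  finally have D: "integral {0..1} (\<lambda>t. (1 - t^2) powr (\<nu> - 1/2) * sinh (x * t)) -
        integral {0..1} (\<lambda>t. (1 - t^2) powr (\<nu> - 1/2) * cosh (x * t)) =
        - integral {0..1} (\<lambda>t. (1 - t^2) powr (\<nu> - 1/2) * exp (- x * t))" .
  have "struveM \<nu> x = KK \<nu> x * (integral {0..1} (\<lambda>t. (1 - t^2) powr (\<nu> - 1/2) * sinh (x * t)) -
        integral {0..1} (\<lambda>t. (1 - t^2) powr (\<nu> - 1/2) * cosh (x * t)))"
    unfolding struveM_def struveL_int(1)[OF nu x] besselI_int[OF nu x] by (simp only: right_diff_distrib)
  then show ?thesis unfolding D by simp
qed

fun FF :: "real \<Rightarrow> nat \<Rightarrow> real \<Rightarrow> real" where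
  "FF x 0 t = - exp (- x * t) / x"
| "FF x (Suc m) t = - (t ^ (Suc m)) * exp (- x * t) / x + real (Suc m) / x * FF x m t"

lemma FF_deriv:
  assumes x: "x > 0"
  shows "(FF x m has_real_derivative (t ^ m * exp (- x * t))) (at t)"
proof (induction m)
  case 0
  show ?case
    using x by (auto intro!: derivative_eq_intros simp: field_simps)
next
  case (Suc m)
  have d1: "((\<lambda>t. - (t ^ (Suc m)) * exp (- x * t) / x) has_real_derivative
       (- (real (Suc m) * t ^ m * exp (- x * t)) / x + t ^ Suc m * exp (- x * t))) (at t)"
  proof -
    have p: "((\<lambda>t. t ^ (Suc m)) has_real_derivative (real (Suc m) * t ^ m)) (at t)"
      using DERIV_pow[of "Suc m" t UNIV] by simp
    have e: "((\<lambda>t. exp (- x * t)) has_real_derivative (exp (- x * t) * (- x))) (at t)"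
      by (auto intro!: derivative_eq_intros)
    have "((\<lambda>t. - (t ^ (Suc m) * exp (- x * t)) / x) has_real_derivative
       (- (real (Suc m) * t ^ m * exp (- x * t) + t ^ (Suc m) * (exp (- x * t) * (- x)))) / x) (at t)"
    proof (intro DERIV_cdivide DERIV_minus)
      show "((\<lambda>t. t ^ (Suc m) * exp (- x * t)) has_real_derivative
       (real (Suc m) * t ^ m * exp (- x * t) + t ^ (Suc m) * (exp (- x * t) * (- x)))) (at t)"
        using DERIV_mult[OF p e] by (simp add: algebra_simps)
    qed
    then show ?thesis using x by (simp add: field_simps)
  qed
  have d2: "((\<lambda>t. real (Suc m) / x * FF x m t) has_real_derivative (real (Suc m) / x * (t ^ m * exp (- x * t)))) (at t)"
    by (rule DERIV_cmult[OF Suc.IH])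
  have eqf: "(\<lambda>t. - (t ^ (Suc m)) * exp (- x * t) / x + real (Suc m) / x * FF x m t) = FF x (Suc m)"
    by (rule ext) simp
  have H: "(FF x (Suc m) has_real_derivative
     ((- (real (Suc m) * t ^ m * exp (- x * t)) / x + t ^ Suc m * exp (- x * t)) + real (Suc m) / x * (t ^ m * exp (- x * t)))) (at t)"
    using DERIV_add[OF d1 d2] unfolding eqf .
  have D: "(- (real (Suc m) * t ^ m * exp (- x * t)) / x + t ^ Suc m * exp (- x * t)) + real (Suc m) / x * (t ^ m * exp (- x * t))
     = t ^ Suc m * exp (- x * t)" using x by (simp add: field_simps)
  show ?case using H unfolding D .
qed

lemma FF_integral:
  assumes x: "x > 0"
  shows "((\<lambda>t. t ^ m * exp (- x * t)) has_integral (FF x m 1 - FF x m 0)) {0..1}"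
proof (rule fundamental_theorem_of_calculus)
  fix t :: real assume "t \<in> {0..1}"
  show "(FF x m has_vector_derivative t ^ m * exp (- x * t)) (at t within {0..1})"
    using FF_deriv[OF x, of m t] by (simp add: has_real_derivative_iff_has_vector_derivative[symmetric] has_field_derivative_at_within)
qed simp

lemma FF_zero: "x > 0 \<Longrightarrow> FF x m 0 = - fact m / x ^ (m+1)"
proof (induction m)
  case 0
  then show ?case by simp
next
  case (Suc m)
  have "FF x (Suc m) 0 = real (Suc m) / x * FF x m 0" by simp
  also have "\<dots> = real (Suc m) / x * (- fact m / x ^ (m+1))" using Suc by simp
  also have "\<dots> = - fact (Suc m) / x ^ (Suc m + 1)" using Suc.prems by (simp add: fact_Suc field_simps)
  finally show ?case .
qed

definition GG :: "real \<Rightarrow> nat \<Rightarrow> real" where "GG x m = - FF x m 1"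

lemma GG_rec: "GG x 0 = exp (- x) / x" "GG x (Suc m) = exp (- x) / x + real (Suc m) / x * GG x m"
  by (simp_all add: GG_def)

lemma GG_nonneg: "x > 0 \<Longrightarrow> GG x m \<ge> 0"
  by (induction m) (auto simp: GG_rec)

lemma pow_exp_le: fixes x :: real assumes "x \<ge> 0" shows "x ^ n * exp (- x) \<le> fact n"
proof -
  have s: "(\<lambda>j. x^j / fact j) sums exp x" using exp_converges[of x] by (simp add: divide_inverse mult.commute)
  have "x ^ n / fact n \<le> exp x"
    using sum_le_suminf[OF sums_summable[OF s], of "{n}"] sums_unique[OF s] assms by simp
  then have "x ^ n \<le> fact n * exp x" by (simp add: field_simps)
  then show ?thesis by (simp add: exp_minus field_simps)
qed

lemma GG_bound:
  assumes x: "x > 0"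
  shows "m + 1 \<le> j \<Longrightarrow> x ^ j * GG x m \<le> fact (m+1) * fact j"
proof (induction m arbitrary: j)
  case 0
  then obtain i where j: "j = Suc i" by (cases j) auto
  have "x ^ j * GG x 0 = x ^ i * exp (- x)" using x by (simp add: GG_rec j field_simps)
  also have "\<dots> \<le> fact i" by (rule pow_exp_le) (use x in simp)
  also have "\<dots> \<le> fact j" unfolding j by (rule fact_mono) simp
  finally show ?case by simp
next
  case (Suc m)
  then obtain i where j: "j = Suc i" and i: "m + 1 \<le> i" by (cases j) auto
  have "x ^ j * GG x (Suc m) = x ^ i * exp (- x) + real (Suc m) * (x ^ i * GG x m)"
    using x by (simp add: GG_rec j field_simps)
  also have "\<dots> \<le> fact i + real (Suc m) * (fact (m+1) * fact i)"
    using pow_exp_le[of x i] Suc.IH[OF i] x by (intro add_mono mult_left_mono) auto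
  also have "\<dots> = (1 + real (Suc m) * fact (m+1)) * fact i" by (simp add: algebra_simps)
  also have "\<dots> \<le> fact (Suc m + 1) * fact j"
  proof (rule mult_mono)
    have f: "(fact (Suc m + 1)::real) = real (m+2) * fact (m+1)" by (simp only: fact_Suc Suc_eq_plus1[symmetric] of_nat_Suc) simp
    have g: "1 \<le> F \<Longrightarrow> 1 + real (Suc m) * F \<le> real (m+2) * F" for F :: real by (simp add: algebra_simps)
    show "1 + real (Suc m) * fact (m+1) \<le> (fact (Suc m + 1)::real)" unfolding f by (rule g, rule fact_ge_1)
    show "(fact i::real) \<le> fact j" unfolding j by (rule fact_mono) simp
  qed auto
  finally show ?case .
qed

definition TR :: "nat \<Rightarrow> real \<Rightarrow> real \<Rightarrow> real" where
  "TR N a u = (1 - u) powr a - (\<Sum>n<N. (a gchoose n) * (- u) ^ n)"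

lemma TR_zero: "TR N a 0 = (if N = 0 then 1 else 0)"
proof (cases N)
  case 0 then show ?thesis by (simp add: TR_def)
next
  case (Suc M)
  then show ?thesis by (simp add: TR_def sum.lessThan_Suc_shift)
qed

lemma TR_cont: "a > 0 \<Longrightarrow> continuous_on {0..1} (TR N a)"
proof -
  assume a: "a > 0"
  have c1: "continuous_on {0..1::real} (\<lambda>u. (1 - u) powr a)"
    by (rule continuous_on_powr') (use a in \<open>auto intro!: continuous_intros\<close>)
  have c2: "continuous_on {0..1::real} (\<lambda>u. \<Sum>n<N. (a gchoose n) * (- u) ^ n)"
    by (intro continuous_intros)
  show ?thesis unfolding TR_def[abs_def] by (rule continuous_on_diff[OF c1 c2])
qed

lemma TR_deriv:
  assumes a: "a > 0" and v: "0 < v" "v < 1"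
  shows "(TR (Suc N) a has_real_derivative (- a * TR N (a - 1) v)) (at v)"
proof -
  have d1: "((\<lambda>u. (1 - u) powr a) has_real_derivative (- a * (1 - v) powr (a - 1))) (at v)"
    using v by (auto intro!: derivative_eq_intros simp: field_simps)
  have d2: "((\<lambda>u. \<Sum>n<Suc N. (a gchoose n) * (- u) ^ n) has_real_derivative
      (\<Sum>n<Suc N. (a gchoose n) * (real n * (- v) ^ (n - 1) * (- 1)))) (at v)"
    by (rule DERIV_sum, rule DERIV_cmult, auto intro!: derivative_eq_intros)
  have s: "(\<Sum>n<Suc N. (a gchoose n) * (real n * (- v) ^ (n - 1) * (- 1))) =
      - a * (\<Sum>m<N. ((a - 1) gchoose m) * (- v) ^ m)"
  proof -
    have "(\<Sum>n<Suc N. (a gchoose n) * (real n * (- v) ^ (n - 1) * (- 1))) =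
       (\<Sum>m<N. (a gchoose Suc m) * (real (Suc m) * (- v) ^ m * (- 1)))"
      by (subst sum.lessThan_Suc_shift) simp
    also have "\<dots> = (\<Sum>m<N. - (a * ((a - 1) gchoose m)) * (- v) ^ m)"
    proof (rule sum.cong)
      fix m
      have "of_nat (Suc m) * (a gchoose Suc m) = a * ((a - 1) gchoose m)" by (rule gbinomial_absorption)
      moreover have "(a gchoose Suc m) * (real (Suc m) * (- v) ^ m * (- 1)) = - ((of_nat (Suc m) * (a gchoose Suc m)) * (- v) ^ m)"
        by (simp only: mult_ac)
      ultimately show "(a gchoose Suc m) * (real (Suc m) * (- v) ^ m * (- 1)) = - (a * ((a - 1) gchoose m)) * (- v) ^ m"
        by simp
    qed simp
    also have "\<dots> = - a * (\<Sum>m<N. ((a - 1) gchoose m) * (- v) ^ m)"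
      by (simp add: sum_distrib_left algebra_simps)
    finally show ?thesis .
  qed
  have "(TR (Suc N) a has_real_derivative (- a * (1 - v) powr (a - 1) -
      (\<Sum>n<Suc N. (a gchoose n) * (real n * (- v) ^ (n - 1) * (- 1))))) (at v)"
    unfolding TR_def[abs_def] by (rule DERIV_diff[OF d1 d2])
  then show ?thesis unfolding s by (simp add: TR_def algebra_simps)
qed

lemma TR_bound: "real N \<le> a \<Longrightarrow> u \<in> {0..1} \<Longrightarrow> \<bar>TR N a u\<bar> \<le> \<bar>a gchoose N\<bar> * u ^ N"
proof (induction N arbitrary: a u)
  case 0
  have "(1 - u) powr a \<le> 1" using 0 by (intro powr_le1) auto
  then show ?case by (simp add: TR_def)
next
  case (Suc N)
  have a: "a > 0" using Suc.prems(1) by simp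
  have a1: "real N \<le> a - 1" using Suc.prems(1) by simp
  define B where "B = \<bar>a gchoose Suc N\<bar>"
  have BB: "real (Suc N) * B = a * \<bar>(a - 1) gchoose N\<bar>"
  proof -
    have "of_nat (Suc N) * (a gchoose Suc N) = a * ((a - 1) gchoose N)" by (rule gbinomial_absorption)
    then have "\<bar>real (Suc N) * (a gchoose Suc N)\<bar> = \<bar>a * ((a - 1) gchoose N)\<bar>" by simp
    then show ?thesis unfolding B_def using a by (simp add: abs_mult)
  qed
  have u: "0 \<le> u" "u \<le> 1" using Suc.prems(2) by auto
  have key: "0 \<le> B * v ^ Suc N + s * TR (Suc N) a v" if s: "s = 1 \<or> s = -1" and v: "v \<in> {0..u}" for s v
  proof -
    let ?h = "\<lambda>w. B * w ^ Suc N + s * TR (Suc N) a w"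
    have "?h 0 \<le> ?h v"
    proof (rule DERIV_nonneg_imp_increasing_open[of 0 v ?h])
      show "0 \<le> v" using v by auto
    next
      fix w assume w: "0 < w" "w < v"
      then have w1: "w < 1" using v u by auto
      have "(?h has_real_derivative (B * (real (Suc N) * w ^ N) + s * (- a * TR N (a - 1) w))) (at w)"
        using DERIV_pow[of "Suc N" w UNIV]
        by (intro DERIV_add DERIV_cmult TR_deriv[OF a w(1) w1]) simp
      moreover have "0 \<le> B * (real (Suc N) * w ^ N) + s * (- a * TR N (a - 1) w)"
      proof -
        have ib: "\<bar>TR N (a - 1) w\<bar> \<le> \<bar>(a - 1) gchoose N\<bar> * w ^ N"
          using Suc.IH[OF a1, of w] w w1 by auto
        have "\<bar>s * (- a * TR N (a - 1) w)\<bar> = a * \<bar>TR N (a - 1) w\<bar>" using s a by (auto simp: abs_mult)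
        also have "\<dots> \<le> a * (\<bar>(a - 1) gchoose N\<bar> * w ^ N)" using ib a by (intro mult_left_mono) auto
        also have "\<dots> = (a * \<bar>(a - 1) gchoose N\<bar>) * w ^ N" by (simp only: mult_ac)
        also have "\<dots> = B * (real (Suc N) * w ^ N)" unfolding BB[symmetric] by (simp only: mult_ac)
        finally show ?thesis by linarith
      qed
      ultimately show "\<exists>y. (?h has_real_derivative y) (at w) \<and> 0 \<le> y" by blast
    next
      have "continuous_on {0..v} (TR (Suc N) a)"
        by (rule continuous_on_subset[OF TR_cont[OF a]]) (use v u in auto)
      then show "continuous_on {0..v} ?h" by (intro continuous_intros)
    qed
    then show ?thesis by (simp add: TR_zero)
  qed
  have "0 \<le> B * u ^ Suc N + TR (Suc N) a u" using key[of 1 u] u by simp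
  moreover have "0 \<le> B * u ^ Suc N - TR (Suc N) a u" using key[of "-1" u] u by simp
  ultimately show ?case unfolding B_def by linarith
qed

lemma gch_step:
  fixes a :: real assumes "real (Suc k) \<le> a"
  shows "\<bar>a gchoose k\<bar> \<le> real (Suc k) * \<bar>a gchoose Suc k\<bar>"
proof -
  have "a * (a gchoose k) = of_nat k * (a gchoose k) + of_nat (Suc k) * (a gchoose (Suc k))"
    by (rule gbinomial_mult_1)
  then have e: "(a - real k) * (a gchoose k) = real (Suc k) * (a gchoose Suc k)" by (simp add: algebra_simps)
  have "\<bar>a gchoose k\<bar> \<le> (a - real k) * \<bar>a gchoose k\<bar>"
  proof -
    have "1 \<le> a - real k" using assms by simp
    from mult_right_mono[OF this abs_ge_zero[of "a gchoose k"]] show ?thesis by simp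
  qed
  also have "\<dots> = \<bar>(a - real k) * (a gchoose k)\<bar>" using assms by (simp add: abs_mult)
  also have "\<dots> = real (Suc k) * \<bar>a gchoose Suc k\<bar>" unfolding e by (simp add: abs_mult)
  finally show ?thesis .
qed

lemma gch_ratio:
  fixes a :: real
  shows "real N \<le> a \<Longrightarrow> n \<le> N \<Longrightarrow> \<bar>a gchoose n\<bar> \<le> fact N * \<bar>a gchoose N\<bar>"
proof (induction N)
  case 0
  then show ?case by simp
next
  case (Suc N)
  show ?case
  proof (cases "n = Suc N")
    case True
    have "1 * \<bar>a gchoose n\<bar> \<le> fact (Suc N) * \<bar>a gchoose n\<bar>"
      by (rule mult_right_mono[OF fact_ge_1 abs_ge_zero])
    then show ?thesis using True by simp
  next
    case False
    then have n: "n \<le> N" using Suc.prems by simp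
    have "\<bar>a gchoose n\<bar> \<le> fact N * \<bar>a gchoose N\<bar>" using Suc.IH[OF _ n] Suc.prems by simp
    also have "\<dots> \<le> fact N * (real (Suc N) * \<bar>a gchoose Suc N\<bar>)"
      by (intro mult_left_mono gch_step) (use Suc.prems in auto)
    also have "\<dots> = fact (Suc N) * \<bar>a gchoose Suc N\<bar>" by (simp add: fact_Suc algebra_simps)
    finally show ?thesis .
  qed
qed

definition CC :: "nat \<Rightarrow> real" where
  "CC N = 1 + real N * fact N * fact (2*N+1) * fact (2*N+1)"

lemma main_est:
  fixes a x :: real and N :: nat
  assumes aN: "real N \<le> a" and a: "a > 0" and x: "x > 0"
  shows "\<bar>x * integral {0..1} (\<lambda>t. (1 - t^2) powr a * exp (- x * t)) -
          (\<Sum>n<N. (-1) ^ n * (a gchoose n) * fact (2*n) / x ^ (2*n))\<bar>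
         \<le> CC N * (\<bar>a gchoose N\<bar> * fact (2*N) / x ^ (2*N))"
proof -
  define J where "J = integral {0..1} (\<lambda>t. (1 - t^2) powr a * exp (- x * t))"
  define c where "c = (\<lambda>n. (-1) ^ n * (a gchoose n))"
  define ee where "ee = (\<lambda>m. fact m / x ^ (m+1) - GG x m)"
  define gN where "gN = \<bar>a gchoose N\<bar>"
  have eint: "((\<lambda>t. t ^ m * exp (- x * t)) has_integral ee m) {0..1}" for m
    using FF_integral[OF x, of m] unfolding ee_def GG_def FF_zero[OF x] by (simp add: algebra_simps)
  have c1: "continuous_on {0..1::real} (\<lambda>t::real. (1 - t^2) powr a)"
    by (rule continuous_on_powr') (use a in \<open>auto intro!: continuous_intros simp: abs_square_le_1\<close>)
  have Jint: "((\<lambda>t. (1 - t^2) powr a * exp (- x * t)) has_integral J) {0..1}"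
  proof -
    have "continuous_on {0..1} (\<lambda>t. (1 - t^2) powr a * exp (- x * t))"
      by (intro continuous_on_mult[OF c1] continuous_intros)
    then show ?thesis unfolding J_def by (intro integrable_integral integrable_continuous_real)
  qed
  have Pint: "((\<lambda>t. \<Sum>n<N. c n * (t ^ (2*n) * exp (- x * t))) has_integral (\<Sum>n<N. c n * ee (2*n))) {0..1}"
    by (intro has_integral_sum has_integral_mult_right eint) auto
  have Rint: "((\<lambda>t. (1 - t^2) powr a * exp (- x * t) - (\<Sum>n<N. c n * (t ^ (2*n) * exp (- x * t))))
      has_integral (J - (\<Sum>n<N. c n * ee (2*n)))) {0..1}"
    by (rule has_integral_diff[OF Jint Pint])
  have Bint: "((\<lambda>t. gN * (t ^ (2*N) * exp (- x * t))) has_integral (gN * ee (2*N))) {0..1}"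
    by (intro has_integral_mult_right eint)
  have pw: "\<bar>(1 - t^2) powr a * exp (- x * t) - (\<Sum>n<N. c n * (t ^ (2*n) * exp (- x * t)))\<bar>
        \<le> gN * (t ^ (2*N) * exp (- x * t))" if t: "t \<in> {0..1}" for t
  proof -
    have "(1 - t^2) powr a * exp (- x * t) - (\<Sum>n<N. c n * (t ^ (2*n) * exp (- x * t)))
        = TR N a (t^2) * exp (- x * t)"
    proof -
      have "(\<Sum>n<N. c n * (t ^ (2*n) * exp (- x * t))) = (\<Sum>n<N. (a gchoose n) * (- (t^2)) ^ n) * exp (- x * t)"
        unfolding sum_distrib_right
      proof (intro sum.cong refl)
        fix n
        have pm: "(- (t^2))^n = (-1)^n * (t^2)^n" by (rule power_minus)
        have p2: "t^(2*n) = (t^2)^n" by (rule power_mult)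
        show "c n * (t ^ (2*n) * exp (- x * t)) = (a gchoose n) * (- (t^2)) ^ n * exp (- x * t)"
          unfolding c_def pm p2 by (simp only: mult_ac)
      qed
      then show ?thesis unfolding TR_def by (simp add: algebra_simps)
    qed
    also have "\<bar>\<dots>\<bar> = \<bar>TR N a (t^2)\<bar> * exp (- x * t)" by (simp add: abs_mult)
    also have "\<dots> \<le> (gN * (t^2) ^ N) * exp (- x * t)"
    proof -
      have t2: "t^2 \<in> {0..1}" using t by (auto intro: power_le_one)
      show ?thesis using TR_bound[OF aN t2] unfolding gN_def by (intro mult_right_mono) auto
    qed
    also have "\<dots> = gN * (t ^ (2*N) * exp (- x * t))" by (simp add: power_mult)
    finally show ?thesis .
  qed
  have Rb: "\<bar>J - (\<Sum>n<N. c n * ee (2*n))\<bar> \<le> gN * ee (2*N)"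
  proof -
    have "J - (\<Sum>n<N. c n * ee (2*n)) \<le> gN * ee (2*N)"
      by (rule has_integral_le[OF Rint Bint]) (rule abs_le_D1[OF pw])
    moreover have "- (gN * ee (2*N)) \<le> J - (\<Sum>n<N. c n * ee (2*n))"
    proof (rule has_integral_le[OF has_integral_neg[OF Bint] Rint])
      fix t :: real assume "t \<in> {0..1}"
      from abs_le_D2[OF pw[OF this]] show "- (gN * (t ^ (2*N) * exp (- x * t))) \<le>
         (1 - t^2) powr a * exp (- x * t) - (\<Sum>n<N. c n * (t ^ (2*n) * exp (- x * t)))" by linarith
    qed
    ultimately show ?thesis by linarith
  qed
  have GG0: "GG x m \<ge> 0" for m by (rule GG_nonneg[OF x])
  have xee: "x * ee m \<le> fact m / x ^ m" for m
    using GG0[of m] x unfolding ee_def by (simp add: field_simps)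
  have xee2: "x * ee m = fact m / x ^ m - x * GG x m" for m
    using x unfolding ee_def by (simp add: field_simps)
  define S where "S = (\<Sum>n<N. (-1) ^ n * (a gchoose n) * fact (2*n) / x ^ (2*n))"
  have S_eq: "S = (\<Sum>n<N. c n * (fact (2*n) / x ^ (2*n)))"
    unfolding S_def c_def by (simp add: algebra_simps)
  have split: "x * J - S = x * (J - (\<Sum>n<N. c n * ee (2*n))) - (\<Sum>n<N. c n * (x * GG x (2*n)))"
  proof -
    have Seq2: "S = (\<Sum>n<N. x * (c n * ee (2*n))) + (\<Sum>n<N. c n * (x * GG x (2*n)))"
      unfolding S_eq sum.distrib[symmetric]
    proof (intro sum.cong refl)
      fix n
      have "fact (2*n) / x^(2*n) = x * ee (2*n) + x * GG x (2*n)" using xee2[of "2*n"] by simp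
      then show "c n * (fact (2*n) / x ^ (2*n)) = x * (c n * ee (2*n)) + c n * (x * GG x (2*n))"
        by (simp add: algebra_simps)
    qed
    show ?thesis unfolding Seq2 by (simp add: right_diff_distrib sum_distrib_left)
  qed
  define W where "W = gN / x ^ (2*N)"
  have W0: "W \<ge> 0" unfolding W_def gN_def using x by simp
  have b1: "\<bar>x * (J - (\<Sum>n<N. c n * ee (2*n)))\<bar> \<le> fact (2*N) * W"
  proof -
    have "\<bar>x * (J - (\<Sum>n<N. c n * ee (2*n)))\<bar> = x * \<bar>J - (\<Sum>n<N. c n * ee (2*n))\<bar>"
      using x by (simp add: abs_mult)
    also have "\<dots> \<le> x * (gN * ee (2*N))" using Rb x by (intro mult_left_mono) auto
    also have "\<dots> = gN * (x * ee (2*N))" by simp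
    also have "\<dots> \<le> gN * (fact (2*N) / x ^ (2*N))" using xee[of "2*N"] unfolding gN_def
      by (intro mult_left_mono) auto
    also have "\<dots> = fact (2*N) * W" unfolding W_def by simp
    finally show ?thesis .
  qed
  have b2: "\<bar>c n * (x * GG x (2*n))\<bar> \<le> fact N * fact (2*N+1) * fact (2*N+1) * W" if n: "n < N" for n
  proof -
    have "x ^ (2*N+1) * GG x (2*n) \<le> fact (2*n+1) * fact (2*N+1)"
      by (rule GG_bound[OF x]) (use n in simp)
    also have "\<dots> \<le> fact (2*N+1) * fact (2*N+1)"
      by (intro mult_right_mono fact_mono) (use n in auto)
    finally have g: "x * GG x (2*n) \<le> fact (2*N+1) * fact (2*N+1) / x ^ (2*N)"
      using x by (simp add: field_simps)
    have cn: "\<bar>c n\<bar> \<le> fact N * gN" unfolding c_def gN_def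
      using gch_ratio[OF aN, of n] n by (simp add: abs_mult)
    have "\<bar>c n * (x * GG x (2*n))\<bar> = \<bar>c n\<bar> * (x * GG x (2*n))" using x GG0 by (simp add: abs_mult)
    also have "\<dots> \<le> (fact N * gN) * (fact (2*N+1) * fact (2*N+1) / x ^ (2*N))"
      using cn g x GG0[of "2*n"] by (intro mult_mono) auto
    also have "\<dots> = fact N * fact (2*N+1) * fact (2*N+1) * W" unfolding W_def by simp
    finally show ?thesis .
  qed
  have b3: "\<bar>\<Sum>n<N. c n * (x * GG x (2*n))\<bar> \<le> real N * (fact N * fact (2*N+1) * fact (2*N+1) * W)"
  proof -
    have "\<bar>\<Sum>n<N. c n * (x * GG x (2*n))\<bar> \<le> (\<Sum>n<N. \<bar>c n * (x * GG x (2*n))\<bar>)" by (rule sum_abs)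
    also have "\<dots> \<le> (\<Sum>n<N. fact N * fact (2*N+1) * fact (2*N+1) * W)" by (intro sum_mono b2) auto
    also have "\<dots> = real N * (fact N * fact (2*N+1) * fact (2*N+1) * W)" by simp
    finally show ?thesis .
  qed
  have "\<bar>x * J - S\<bar> \<le> fact (2*N) * W + real N * (fact N * fact (2*N+1) * fact (2*N+1) * W)"
    unfolding split using b1 b3 by linarith
  also have "\<dots> \<le> CC N * (fact (2*N) * W)"
  proof -
    have f1: "(1::real) \<le> fact (2*N)" by simp
    have "real N * (fact N * fact (2*N+1) * fact (2*N+1) * W) \<le>
        real N * (fact N * fact (2*N+1) * fact (2*N+1)) * (fact (2*N) * W)"
      using f1 W0 by (simp add: mult_ac mult_right_mono[of 1 "fact (2*N)", simplified] mult_left_mono)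
    then show ?thesis unfolding CC_def by (simp add: algebra_simps)
  qed
  finally show ?thesis unfolding J_def S_def W_def gN_def by (simp add: mult_ac)
qed

lemma phi_gch:
  fixes \<nu> :: real
  assumes nu: "\<nu> > 0" and n: "real n < \<nu> + 1/2"
  shows "phi n \<nu> = fact n * ((\<nu> - 1/2) gchoose n) / \<nu> ^ (2*n)"
proof -
  have ni: "\<nu> - 1/2 + 1 \<notin> \<int>\<^sub>\<le>\<^sub>0" using nu by auto
  have g: "((\<nu> - 1/2) gchoose n) = Gamma (\<nu> + 1/2) / (fact n * Gamma (\<nu> - real n + 1/2))"
  proof -
    have e1: "\<nu> - 1/2 + 1 = \<nu> + 1/2" by simp
    have e2: "\<nu> - 1/2 - real n + 1 = \<nu> - real n + 1/2" by simp
    show ?thesis using gbinomial_Gamma[OF ni, of n] unfolding e1 e2 .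
  qed
  have G: "Gamma (\<nu> - real n + 1/2) > 0" using n by simp
  show ?thesis unfolding g phi_def using G nu by (simp add: field_simps)
qed

theorem mainTheorem13:
  fixes N :: nat
  shows "\<exists>E :: real \<Rightarrow> real \<Rightarrow> real.
    (\<forall>\<nu> lam. \<nu> > max 0 (2 * real N - 3/2) \<and> lam > 0 \<longrightarrow>
       struveM \<nu> (lam * \<nu>) =
         - ((lam * \<nu> / 2) powr (\<nu> - 1) / (sqrt pi * Gamma (\<nu> + 1/2))) *
           ((\<Sum>n<N. (-1) ^ n * fact (2*n) / (fact n * lam ^ (2*n)) * phi n \<nu>)
            + (-1) ^ N * fact (2*N) / (fact N * lam ^ (2*N)) * phi N \<nu> * E \<nu> lam))
    \<and> (\<exists>C \<nu>0. \<forall>\<nu> \<ge> \<nu>0. \<forall>lam > 0. \<bar>E \<nu> lam\<bar> \<le> C)"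
proof -
  define P where "P = (\<lambda>\<nu> lam. (lam * \<nu> / 2) powr (\<nu> - 1) / (sqrt pi * Gamma (\<nu> + 1/2)))"
  define S where "S = (\<lambda>\<nu> lam. (\<Sum>n<N. (-1) ^ n * fact (2*n) / (fact n * lam ^ (2*n)) * phi n \<nu>))"
  define T where "T = (\<lambda>\<nu> lam. (-1) ^ N * fact (2*N) / (fact N * lam ^ (2*N)) * phi N \<nu>)"
  define E where "E = (\<lambda>\<nu> lam. (- struveM \<nu> (lam * \<nu>) / P \<nu> lam - S \<nu> lam) / T \<nu> lam)"
  have eq: "struveM \<nu> (lam * \<nu>) = - P \<nu> lam * (S \<nu> lam + T \<nu> lam * E \<nu> lam)"
    if nu: "\<nu> > max 0 (2 * real N - 3/2)" and lam: "lam > 0" for \<nu> lam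
  proof -
    have nu0: "\<nu> > 0" using nu by simp
    have P0: "P \<nu> lam > 0" unfolding P_def using nu0 lam by simp
    have G: "Gamma (\<nu> - real N + 1/2) > 0"
    proof (cases N)
      case 0 then show ?thesis using nu0 by simp
    next
      case (Suc M) then show ?thesis using nu by (intro Gamma_real_pos) simp
    qed
    have G2: "Gamma (\<nu> + 1/2) > 0" using nu0 by simp
    have ph: "phi N \<nu> > 0" unfolding phi_def using G G2 nu0
      by (intro divide_pos_pos mult_pos_pos zero_less_power) auto
    have T0: "T \<nu> lam \<noteq> 0" unfolding T_def using ph lam by simp
    show ?thesis unfolding E_def using P0 T0 by (simp add: field_simps)
  qed
  have bound: "\<bar>E \<nu> lam\<bar> \<le> CC N" if nu: "\<nu> \<ge> real N + 1" and lam: "lam > 0" for \<nu> lam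
  proof -
    define a where "a = \<nu> - 1/2"
    define x where "x = lam * \<nu>"
    have nu0: "\<nu> > 1/2" using nu by simp
    have x0: "x > 0" unfolding x_def using lam nu0 by simp
    have aN: "real N \<le> a" "a > 0" unfolding a_def using nu by auto
    define J where "J = integral {0..1} (\<lambda>t. (1 - t^2) powr a * exp (- x * t))"
    have M: "struveM \<nu> (lam * \<nu>) = - KK \<nu> x * J"
      unfolding J_def a_def x_def by (rule struveM_int[OF nu0]) (use x0 in \<open>simp add: x_def\<close>)
    have KP: "KK \<nu> x = x * P \<nu> lam"
    proof -
      have "(x/2) powr \<nu> = (x/2) powr (\<nu> - 1) * (x/2)"
        using x0 powr_add[of "x/2" "\<nu> - 1" 1] by simp
      then show ?thesis unfolding KK_def P_def x_def[symmetric] by (simp add: field_simps)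
    qed
    have P0: "P \<nu> lam > 0" unfolding P_def using nu0 lam by simp
    have Q: "- struveM \<nu> (lam * \<nu>) / P \<nu> lam = x * J" unfolding M KP using P0 by simp
    have phn: "fact (2*n) / (fact n * lam ^ (2*n)) * phi n \<nu> = (a gchoose n) * fact (2*n) / x ^ (2*n)"
      if n: "n \<le> N" for n
    proof -
      have "phi n \<nu> = fact n * (a gchoose n) / \<nu> ^ (2*n)"
        unfolding a_def by (rule phi_gch) (use nu n nu0 in auto)
      then show ?thesis unfolding x_def using lam nu0 by (simp add: field_simps power_mult_distrib)
    qed
    have Seq: "S \<nu> lam = (\<Sum>n<N. (-1) ^ n * (a gchoose n) * fact (2*n) / x ^ (2*n))"
      unfolding S_def
    proof (intro sum.cong refl)
      fix n assume "n \<in> {..<N}"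
      then have n: "n \<le> N" by simp
      have "(-1) ^ n * fact (2*n) / (fact n * lam ^ (2*n)) * phi n \<nu> =
          (-1) ^ n * (fact (2*n) / (fact n * lam ^ (2*n)) * phi n \<nu>)" by simp
      also have "\<dots> = (-1) ^ n * ((a gchoose n) * fact (2*n) / x ^ (2*n))" using phn[OF n] by simp
      also have "\<dots> = (-1) ^ n * (a gchoose n) * fact (2*n) / x ^ (2*n)" by simp
      finally show "(-1) ^ n * fact (2*n) / (fact n * lam ^ (2*n)) * phi n \<nu> =
          (-1) ^ n * (a gchoose n) * fact (2*n) / x ^ (2*n)" .
    qed
    have Teq: "T \<nu> lam = (-1) ^ N * ((a gchoose N) * fact (2*N) / x ^ (2*N))"
    proof -
      have "T \<nu> lam = (-1) ^ N * (fact (2*N) / (fact N * lam ^ (2*N)) * phi N \<nu>)" unfolding T_def by simp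
      also have "\<dots> = (-1) ^ N * ((a gchoose N) * fact (2*N) / x ^ (2*N))" using phn[of N] by simp
      finally show ?thesis .
    qed
    have est: "\<bar>x * J - S \<nu> lam\<bar> \<le> CC N * (\<bar>a gchoose N\<bar> * fact (2*N) / x ^ (2*N))"
      unfolding Seq J_def by (rule main_est[OF aN x0])
    have absT: "\<bar>T \<nu> lam\<bar> = \<bar>a gchoose N\<bar> * fact (2*N) / x ^ (2*N)"
      unfolding Teq using x0 by (simp add: abs_mult)
    have CC0: "CC N \<ge> 0" unfolding CC_def by simp
    have "\<bar>E \<nu> lam\<bar> = \<bar>x * J - S \<nu> lam\<bar> / \<bar>T \<nu> lam\<bar>" unfolding E_def Q by (simp add: abs_divide)
    also have "\<dots> \<le> CC N"
    proof (cases "\<bar>T \<nu> lam\<bar> = 0")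
      case True then show ?thesis using CC0 by simp
    next
      case False
      then have "\<bar>T \<nu> lam\<bar> > 0" by simp
      then show ?thesis using est unfolding absT[symmetric] by (simp add: divide_le_eq)
    qed
    finally show ?thesis .
  qed
  show ?thesis
  proof (intro exI[of _ E] conjI allI impI)
    fix \<nu> lam :: real assume h: "\<nu> > max 0 (2 * real N - 3/2) \<and> lam > 0"
    show "struveM \<nu> (lam * \<nu>) =
         - ((lam * \<nu> / 2) powr (\<nu> - 1) / (sqrt pi * Gamma (\<nu> + 1/2))) *
           ((\<Sum>n<N. (-1) ^ n * fact (2*n) / (fact n * lam ^ (2*n)) * phi n \<nu>)
            + (-1) ^ N * fact (2*N) / (fact N * lam ^ (2*N)) * phi N \<nu> * E \<nu> lam)"
      using eq[of \<nu> lam] h unfolding P_def S_def T_def by simp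
  next
    show "\<exists>C \<nu>0. \<forall>\<nu> \<ge> \<nu>0. \<forall>lam > 0. \<bar>E \<nu> lam\<bar> \<le> C"
      using bound by blast
  qed
qed

end
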